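(* ${\bf KB^\boxdot}$ is strongly complete with respect to the class of symmetric bimodal frames: every ${\bf KB^\boxdot}$-consistent set of $\mathcal{L}(\boxdot)$-formulas is satisfiable at some state of some bimodal model in which both $R_1$ and $R_2$ are symmetric.
   Context: Fix a nonempty set $\mathbf{P}$ of propositional variables. A bimodal model is $\langle S,R_1,R_2,V\rangle$ with $S$ nonempty, $R_1,R_2\subseteq S\times S$, $V:\mathbf{P}\to\mathcal{P}(S)$. $\mathcal{L}(\boxdot):\ \phi::=p\mid\neg\phi\mid(\phi\wedge\phi)\mid\boxdot\phi$. Truth: $\mathcal{M},s\vDash\boxdot\phi$ iff for all $t,u$ with $sR_1t$ and $sR_2u$, ($\mathcal{M},t\vDash\phi\iff\mathcal{M},u\vDash\phi$); atoms and Booleans as usual. ${\bf K^\boxdot}$ has axioms: all instances of propositional tautologies; $\boxdot\top$; $\boxdot\phi\leftrightarrow\boxdot\neg\phi$; $\boxdot\phi\wedge\boxdot\psi\to\boxdot(\phi\wedge\psi)$; $\boxdot\phi\to\boxdot(\phi\vee\psi)\vee\boxdot(\neg\phi\vee\chi)$; rules: modus ponens and RE: from $\phi\leftrightarrow\psi$ infer $\boxdot\phi\leftrightarrow\boxdot\psi$. ${\bf KB^\boxdot}$ is ${\bf K^\boxdot}$ plus the axiom schema $\phi\to\boxdot((\boxdot\phi\wedge\boxdot(\phi\to\psi)\wedge\neg\boxdot\psi)\to\chi)$. A set is consistent if no finite conjunction of its members has a provable negation. *)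

theory Defs
  imports Main
begin

datatype 'p fm = Atom 'p | Neg "'p fm" | Conj "'p fm" "'p fm" | Dot "'p fm"

definition Disj :: "'p fm \<Rightarrow> 'p fm \<Rightarrow> 'p fm" where
  "Disj a b = Neg (Conj (Neg a) (Neg b))"
definition Imp :: "'p fm \<Rightarrow> 'p fm \<Rightarrow> 'p fm" where
  "Imp a b = Neg (Conj a (Neg b))"
definition Iff :: "'p fm \<Rightarrow> 'p fm \<Rightarrow> 'p fm" where
  "Iff a b = Conj (Imp a b) (Imp b a)"
text \<open>A fixed tautology (P is a nonempty type, we use some fixed atom).\<close>
definition Top :: "'p fm" where
  "Top = Neg (Conj (Atom undefined) (Neg (Atom undefined)))"

fun peval :: "('p fm \<Rightarrow> bool) \<Rightarrow> 'p fm \<Rightarrow> bool" where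
  "peval h (Atom p) = h (Atom p)"
| "peval h (Neg a) = (\<not> peval h a)"
| "peval h (Conj a b) = (peval h a \<and> peval h b)"
| "peval h (Dot a) = h (Dot a)"

definition tautology :: "'p fm \<Rightarrow> bool" where
  "tautology \<phi> \<longleftrightarrow> (\<forall>h. peval h \<phi>)"

inductive KBd :: "'p fm \<Rightarrow> bool" where
  Taut: "tautology \<phi> \<Longrightarrow> KBd \<phi>"
| DotTop: "KBd (Dot Top)"
| DotNeg: "KBd (Iff (Dot \<phi>) (Dot (Neg \<phi>)))"
| DotConj: "KBd (Imp (Conj (Dot \<phi>) (Dot \<psi>)) (Dot (Conj \<phi> \<psi>)))"
| DotDisj: "KBd (Imp (Dot \<phi>) (Disj (Dot (Disj \<phi> \<psi>)) (Dot (Disj (Neg \<phi>) \<chi>))))"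
| AxB: "KBd (Imp \<phi> (Dot (Imp (Conj (Conj (Dot \<phi>) (Dot (Imp \<phi> \<psi>))) (Neg (Dot \<psi>))) \<chi>)))"
| MP: "KBd \<phi> \<Longrightarrow> KBd (Imp \<phi> \<psi>) \<Longrightarrow> KBd \<psi>"
| RE: "KBd (Iff \<phi> \<psi>) \<Longrightarrow> KBd (Iff (Dot \<phi>) (Dot \<psi>))"

fun conjs :: "'p fm list \<Rightarrow> 'p fm" where
  "conjs [] = Top"
| "conjs [x] = x"
| "conjs (x # xs) = Conj x (conjs xs)"

definition KBd_consistent :: "'p fm set \<Rightarrow> bool" where
  "KBd_consistent \<Gamma> \<longleftrightarrow> \<not> (\<exists>xs. set xs \<subseteq> \<Gamma> \<and> KBd (Neg (conjs xs)))"

fun sat :: "('s \<times> 's) set \<Rightarrow> ('s \<times> 's) set \<Rightarrow> ('p \<Rightarrow> 's set) \<Rightarrow> 's \<Rightarrow> 'p fm \<Rightarrow> bool" where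
  "sat R1 R2 V s (Atom p) = (s \<in> V p)"
| "sat R1 R2 V s (Neg a) = (\<not> sat R1 R2 V s a)"
| "sat R1 R2 V s (Conj a b) = (sat R1 R2 V s a \<and> sat R1 R2 V s b)"
| "sat R1 R2 V s (Dot a) =
     (\<forall>t u. (s, t) \<in> R1 \<longrightarrow> (s, u) \<in> R2 \<longrightarrow> (sat R1 R2 V t a \<longleftrightarrow> sat R1 R2 V u a))"

definition bimodal_model :: "'s set \<Rightarrow> ('s \<times> 's) set \<Rightarrow> ('s \<times> 's) set \<Rightarrow> ('p \<Rightarrow> 's set) \<Rightarrow> bool" where
  "bimodal_model S R1 R2 V \<longleftrightarrow> S \<noteq> {} \<and> R1 \<subseteq> S \<times> S \<and> R2 \<subseteq> S \<times> S \<and> (\<forall>p. V p \<subseteq> S)"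

end

theory Submission
  imports Defs
begin


lemma peval_Top[simp]: "peval h Top"
  by (simp add: Top_def)

lemma peval_conjs[simp]: "peval h (conjs xs) = (\<forall>x\<in>set xs. peval h x)"
  by (induction xs rule: conjs.induct) auto

lemma peval_defs[simp]:
  "peval h (Disj a b) = (peval h a \<or> peval h b)"
  "peval h (Imp a b) = (peval h a \<longrightarrow> peval h b)"
  "peval h (Iff a b) = (peval h a \<longleftrightarrow> peval h b)"
  by (auto simp: Disj_def Imp_def Iff_def)

lemma KBd_cons:
  assumes "\<forall>x\<in>set xs. KBd x" "\<forall>h. (\<forall>x\<in>set xs. peval h x) \<longrightarrow> peval h y"
  shows "KBd y"
  using assms
proof (induction xs arbitrary: y)
  case Nil
  then show ?case by (auto intro: KBd.Taut simp: tautology_def)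
next
  case (Cons x xs)
  have "KBd (Imp x y)" using Cons by auto
  then show ?case using Cons(2) KBd.MP by auto
qed

lemma KBd_cons1: "KBd a \<Longrightarrow> (\<And>h. peval h a \<Longrightarrow> peval h y) \<Longrightarrow> KBd y"
  using KBd_cons[of "[a]" y] by auto

lemma KBd_cons2: "KBd a \<Longrightarrow> KBd b \<Longrightarrow> (\<And>h. peval h a \<Longrightarrow> peval h b \<Longrightarrow> peval h y) \<Longrightarrow> KBd y"
  using KBd_cons[of "[a,b]" y] by auto

lemma KBd_taut: "(\<And>h. peval h y) \<Longrightarrow> KBd y"
  using KBd_cons[of "[]" y] by auto

definition MCS :: "'p fm set \<Rightarrow> bool" where
  "MCS M \<longleftrightarrow> KBd_consistent M \<and> (\<forall>\<phi>. \<phi> \<notin> M \<longrightarrow> \<not> KBd_consistent (insert \<phi> M))"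

lemma chain_list:
  assumes "C \<noteq> {}" "subset.chain A C" "set xs \<subseteq> \<Union>C"
  shows "\<exists>X\<in>C. set xs \<subseteq> X"
  using assms(3)
proof (induction xs)
  case Nil then show ?case using assms(1) by auto
next
  case (Cons x xs)
  then obtain X where X: "X \<in> C" "set xs \<subseteq> X" by auto
  obtain Y where Y: "Y \<in> C" "x \<in> Y" using Cons.prems by auto
  have "X \<subseteq> Y \<or> Y \<subseteq> X" using assms(2) X Y unfolding subset.chain_def by blast
  then show ?case using X Y by auto
qed

lemma lindenbaum:
  assumes "KBd_consistent \<Gamma>"
  shows "\<exists>M. \<Gamma> \<subseteq> M \<and> MCS M"
proof -
  let ?A = "{D. \<Gamma> \<subseteq> D \<and> KBd_consistent D}"
  have "\<exists>M\<in>?A. \<forall>X\<in>?A. M \<subseteq> X \<longrightarrow> X = M"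
  proof (rule subset_Zorn_nonempty)
    show "?A \<noteq> {}" using assms by auto
  next
    fix C assume C: "C \<noteq> {}" "subset.chain ?A C"
    have "KBd_consistent (\<Union>C)"
      unfolding KBd_consistent_def
    proof
      assume "\<exists>xs. set xs \<subseteq> \<Union>C \<and> KBd (Neg (conjs xs))"
      then obtain xs where xs: "set xs \<subseteq> \<Union>C" "KBd (Neg (conjs xs))" by auto
      then obtain X where "X \<in> C" "set xs \<subseteq> X" using chain_list[OF C] by blast
      then have "KBd_consistent X" using C(2) unfolding subset.chain_def by auto
      then show False using xs \<open>set xs \<subseteq> X\<close> unfolding KBd_consistent_def by auto
    qed
    moreover have "\<Gamma> \<subseteq> \<Union>C" using C unfolding subset.chain_def by blast
    ultimately show "\<Union>C \<in> ?A" by auto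
  qed
  then obtain M where M: "M \<in> ?A" "\<forall>X\<in>?A. M \<subseteq> X \<longrightarrow> X = M" by blast
  have "MCS M" unfolding MCS_def
  proof (intro conjI allI impI)
    show "KBd_consistent M" using M by auto
  next
    fix \<phi> assume "\<phi> \<notin> M"
    show "\<not> KBd_consistent (insert \<phi> M)"
    proof
      assume "KBd_consistent (insert \<phi> M)"
      then have "insert \<phi> M \<in> ?A" using M by auto
      then have "insert \<phi> M = M" using M(2) by blast
      then show False using \<open>\<phi> \<notin> M\<close> by auto
    qed
  qed
  then show ?thesis using M by auto
qed

lemma incons_list:
  assumes "\<not> KBd_consistent (insert \<phi> M)"
  shows "\<exists>xs. set xs \<subseteq> M \<and> KBd (Imp (conjs xs) (Neg \<phi>))"
proof -
  obtain ys where ys: "set ys \<subseteq> insert \<phi> M" "KBd (Neg (conjs ys))"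
    using assms unfolding KBd_consistent_def by auto
  let ?xs = "removeAll \<phi> ys"
  have "set ?xs \<subseteq> M" using ys by auto
  moreover have "KBd (Imp (conjs ?xs) (Neg \<phi>))"
    using ys(2) by (rule KBd_cons1) auto
  ultimately show ?thesis by blast
qed

lemma mcs_neg_or:
  assumes "MCS M" shows "\<phi> \<in> M \<or> Neg \<phi> \<in> M"
proof (rule ccontr)
  assume "\<not> ?thesis"
  then have a: "\<not> KBd_consistent (insert \<phi> M)" "\<not> KBd_consistent (insert (Neg \<phi>) M)"
    using assms unfolding MCS_def by auto
  obtain xs where xs: "set xs \<subseteq> M" "KBd (Imp (conjs xs) (Neg \<phi>))" using incons_list[OF a(1)] by blast
  obtain ys where ys: "set ys \<subseteq> M" "KBd (Imp (conjs ys) (Neg (Neg \<phi>)))" using incons_list[OF a(2)] by blast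
  have "KBd (Neg (conjs (xs @ ys)))" using xs(2) ys(2) by (rule KBd_cons2) auto
  moreover have "set (xs @ ys) \<subseteq> M" using xs ys by auto
  ultimately show False using assms unfolding MCS_def KBd_consistent_def by blast
qed

lemma mcs_closed:
  assumes "MCS M" "set xs \<subseteq> M" "KBd t" "\<And>h. peval h t \<Longrightarrow> (\<forall>x\<in>set xs. peval h x) \<Longrightarrow> peval h y"
  shows "y \<in> M"
proof (rule ccontr)
  assume "y \<notin> M"
  then have "Neg y \<in> M" using mcs_neg_or[OF assms(1)] by auto
  then have "set (Neg y # xs) \<subseteq> M" using assms by auto
  moreover have "KBd (Neg (conjs (Neg y # xs)))" using assms(3) by (rule KBd_cons1) (use assms(4) in auto)
  ultimately show False using assms unfolding MCS_def KBd_consistent_def by blast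
qed

lemma mcs_thm: "MCS M \<Longrightarrow> KBd a \<Longrightarrow> a \<in> M"
  using mcs_closed[of M "[]" a a] by auto

lemma mcs_mp: "MCS M \<Longrightarrow> KBd (Imp a b) \<Longrightarrow> a \<in> M \<Longrightarrow> b \<in> M"
  using mcs_closed[of M "[a]" "Imp a b" b] by auto

lemma mcs_taut1: "MCS M \<Longrightarrow> a \<in> M \<Longrightarrow> (\<And>h. peval h a \<Longrightarrow> peval h b) \<Longrightarrow> b \<in> M"
  using mcs_closed[of M "[a]" "Top" b] KBd_taut[of Top] by auto

lemma mcs_taut2: "MCS M \<Longrightarrow> a \<in> M \<Longrightarrow> c \<in> M \<Longrightarrow> (\<And>h. peval h a \<Longrightarrow> peval h c \<Longrightarrow> peval h b) \<Longrightarrow> b \<in> M"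
  using mcs_closed[of M "[a,c]" "Top" b] KBd_taut[of Top] by auto

lemma mcs_neg: "MCS M \<Longrightarrow> Neg a \<in> M \<longleftrightarrow> a \<notin> M"
proof
  assume "MCS M" "Neg a \<in> M"
  show "a \<notin> M"
  proof
    assume "a \<in> M"
    then have "set [a, Neg a] \<subseteq> M" using \<open>Neg a \<in> M\<close> by auto
    moreover have "KBd (Neg (conjs [a, Neg a]))" by (rule KBd_taut) auto
    ultimately show False using \<open>MCS M\<close> unfolding MCS_def KBd_consistent_def by blast
  qed
next
  assume "MCS M" "a \<notin> M"
  then show "Neg a \<in> M" using mcs_neg_or[of M a] by blast
qed

lemma mcs_conj: "MCS M \<Longrightarrow> Conj a b \<in> M \<longleftrightarrow> a \<in> M \<and> b \<in> M"
proof
  assume M: "MCS M" "Conj a b \<in> M"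
  show "a \<in> M \<and> b \<in> M"
  proof
    show "a \<in> M" by (rule mcs_taut1[OF M]) simp
    show "b \<in> M" by (rule mcs_taut1[OF M]) simp
  qed
next
  assume M: "MCS M" "a \<in> M \<and> b \<in> M"
  then show "Conj a b \<in> M" using mcs_taut2[of M a b "Conj a b"] by simp
qed



lemma dot_neg: "MCS M \<Longrightarrow> Dot (Neg a) \<in> M \<longleftrightarrow> Dot a \<in> M"
  using mcs_thm[OF _ KBd.DotNeg[of a]] mcs_taut2[of M "Iff (Dot a) (Dot (Neg a))" "Dot a" "Dot (Neg a)"]
    mcs_taut2[of M "Iff (Dot a) (Dot (Neg a))" "Dot (Neg a)" "Dot a"] by auto

lemma dot_conj: "MCS M \<Longrightarrow> Dot a \<in> M \<Longrightarrow> Dot b \<in> M \<Longrightarrow> Dot (Conj a b) \<in> M"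
  using mcs_closed[of M "[Dot a, Dot b]" "Imp (Conj (Dot a) (Dot b)) (Dot (Conj a b))" "Dot (Conj a b)"]
    KBd.DotConj[of a b] by auto

lemma dot_eq: "MCS M \<Longrightarrow> KBd (Iff a b) \<Longrightarrow> Dot a \<in> M \<Longrightarrow> Dot b \<in> M"
  using mcs_closed[of M "[Dot a]" "Iff (Dot a) (Dot b)" "Dot b"] KBd.RE[of a b] by auto

lemma dot_eqt: "MCS M \<Longrightarrow> (\<And>h. peval h a = peval h b) \<Longrightarrow> Dot a \<in> M \<Longrightarrow> Dot b \<in> M"
  by (rule dot_eq) (auto intro: KBd_taut)

lemma dot_eqt2: "MCS M \<Longrightarrow> Dot a \<in> M \<Longrightarrow> (\<And>h. peval h a = peval h b) \<Longrightarrow> Dot b \<in> M"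
  using dot_eqt by blast

lemma dot_top: "MCS M \<Longrightarrow> Dot Top \<in> M"
  using mcs_thm KBd.DotTop by blast

lemma dot_or: "MCS M \<Longrightarrow> Dot a \<in> M \<Longrightarrow> Dot b \<in> M \<Longrightarrow> Dot (Disj a b) \<in> M"
proof -
  assume M: "MCS M" "Dot a \<in> M" "Dot b \<in> M"
  then have "Dot (Neg (Conj (Neg a) (Neg b))) \<in> M" using dot_neg dot_conj by metis
  then show ?thesis by (rule dot_eqt2[OF M(1)]) (simp add: Disj_def)
qed

lemma mcs_disj: "MCS M \<Longrightarrow> Disj a b \<in> M \<Longrightarrow> a \<in> M \<or> b \<in> M"
proof -
  assume M: "MCS M" "Disj a b \<in> M"
  show ?thesis
  proof (cases "a \<in> M")
    case False
    then have "Neg a \<in> M" using mcs_neg[OF M(1)] by blast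
    then have "b \<in> M" using mcs_taut2[OF M(1) M(2), of "Neg a" b] by simp
    then show ?thesis ..
  qed simp
qed

lemma dot_disj: "MCS M \<Longrightarrow> Dot \<phi> \<in> M \<Longrightarrow> Dot (Disj \<phi> \<psi>) \<in> M \<or> Dot (Disj (Neg \<phi>) \<chi>) \<in> M"
  by (rule mcs_disj, assumption, rule mcs_mp[OF _ KBd.DotDisj]) 

lemma axB: "MCS M \<Longrightarrow> \<phi> \<in> M \<Longrightarrow> Dot (Imp (Conj (Conj (Dot \<phi>) (Dot (Imp \<phi> \<psi>))) (Neg (Dot \<psi>))) \<chi>) \<in> M"
  using mcs_mp KBd.AxB by blast

definition CR :: "'p fm set \<Rightarrow> 'p fm set \<Rightarrow> bool" where
  "CR M N \<longleftrightarrow> (\<exists>\<chi>. Dot \<chi> \<notin> M \<and> (\<forall>\<phi>. Dot \<phi> \<in> M \<and> Dot (Imp \<chi> \<phi>) \<in> M \<longrightarrow> \<phi> \<in> N))"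

lemma key_choice:
  assumes "MCS M" "Dot \<phi> \<in> M"
  shows "Dot (Imp \<chi> \<phi>) \<in> M \<or> Dot (Imp \<chi> (Neg \<phi>)) \<in> M"
proof -
  have "Dot (Disj \<phi> (Neg \<chi>)) \<in> M \<or> Dot (Disj (Neg \<phi>) (Neg \<chi>)) \<in> M"
    using dot_disj[OF assms, of "Neg \<chi>" "Neg \<chi>"] .
  then show ?thesis
  proof
    assume "Dot (Disj \<phi> (Neg \<chi>)) \<in> M"
    then have "Dot (Imp \<chi> \<phi>) \<in> M" by (rule dot_eqt2[OF assms(1)]) auto
    then show ?thesis ..
  next
    assume "Dot (Disj (Neg \<phi>) (Neg \<chi>)) \<in> M"
    then have "Dot (Imp \<chi> (Neg \<phi>)) \<in> M" by (rule dot_eqt2[OF assms(1)]) auto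
    then show ?thesis ..
  qed
qed

lemma constancy:
  assumes M: "MCS M" "Dot \<phi> \<in> M" and N: "MCS N1" "MCS N2" "CR M N1" "CR M N2" "\<phi> \<in> N1"
  shows "\<phi> \<in> N2"
proof (rule ccontr)
  assume nn: "\<phi> \<notin> N2"
  obtain \<chi>1 where c1: "Dot \<chi>1 \<notin> M" "\<And>\<psi>. Dot \<psi> \<in> M \<Longrightarrow> Dot (Imp \<chi>1 \<psi>) \<in> M \<Longrightarrow> \<psi> \<in> N1"
    using N(3) unfolding CR_def by blast
  obtain \<chi>2 where c2: "Dot \<chi>2 \<notin> M" "\<And>\<psi>. Dot \<psi> \<in> M \<Longrightarrow> Dot (Imp \<chi>2 \<psi>) \<in> M \<Longrightarrow> \<psi> \<in> N2"
    using N(4) unfolding CR_def by blast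
  have dn: "Dot (Neg \<phi>) \<in> M" using M dot_neg by blast
  have i1: "Dot (Imp \<chi>1 \<phi>) \<in> M"
  proof (rule ccontr)
    assume "Dot (Imp \<chi>1 \<phi>) \<notin> M"
    then have "Dot (Imp \<chi>1 (Neg \<phi>)) \<in> M" using key_choice[OF M] by blast
    then have "Neg \<phi> \<in> N1" using c1 dn by blast
    then show False using N mcs_neg by blast
  qed
  have i2: "Dot (Imp \<chi>2 (Neg \<phi>)) \<in> M"
  proof (rule ccontr)
    assume "Dot (Imp \<chi>2 (Neg \<phi>)) \<notin> M"
    then have "Dot (Imp \<chi>2 \<phi>) \<in> M" using key_choice[OF M] by blast
    then have "\<phi> \<in> N2" using c2 M by blast
    then show False using nn by blast
  qed
  from dot_disj[OF M, of \<chi>2 \<chi>1] show False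
  proof
    assume a: "Dot (Disj \<phi> \<chi>2) \<in> M"
    have "Dot (Disj (Conj (Disj \<phi> \<chi>2) (Neg \<phi>)) (Neg (Imp \<chi>2 (Neg \<phi>)))) \<in> M"
      using dot_or[OF M(1) dot_conj[OF M(1) a dn] iffD2[OF dot_neg[OF M(1)] i2]] .
    then have "Dot \<chi>2 \<in> M" by (rule dot_eqt2[OF M(1)]) auto
    then show False using c2 by blast
  next
    assume a: "Dot (Disj (Neg \<phi>) \<chi>1) \<in> M"
    have "Dot (Disj (Conj (Disj (Neg \<phi>) \<chi>1) \<phi>) (Neg (Imp \<chi>1 \<phi>))) \<in> M"
      using dot_or[OF M(1) dot_conj[OF M(1) a M(2)] iffD2[OF dot_neg[OF M(1)] i1]] .
    then have "Dot \<chi>1 \<in> M" by (rule dot_eqt2[OF M(1)]) auto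
    then show False using c1 by blast
  qed
qed

lemma foldr_box:
  assumes "MCS M" "set ys \<subseteq> {\<psi>. Dot \<psi> \<in> M \<and> Dot (Imp \<phi> \<psi>) \<in> M}"
  shows "Dot (foldr Conj ys Top) \<in> M \<and> Dot (Imp \<phi> (foldr Conj ys Top)) \<in> M"
  using assms(2)
proof (induction ys)
  case Nil
  then show ?case using dot_top[OF assms(1)] by (auto intro: dot_eqt[OF assms(1), of Top])
next
  case (Cons y ys)
  then have a: "Dot (foldr Conj ys Top) \<in> M" "Dot (Imp \<phi> (foldr Conj ys Top)) \<in> M"
    "Dot y \<in> M" "Dot (Imp \<phi> y) \<in> M" by auto
  have "Dot (Conj (Imp \<phi> y) (Imp \<phi> (foldr Conj ys Top))) \<in> M" using a assms(1) dot_conj by blast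
  then have "Dot (Imp \<phi> (foldr Conj (y # ys) Top)) \<in> M" by (rule dot_eqt2[OF assms(1)]) auto
  moreover have "Dot (foldr Conj (y # ys) Top) \<in> M" using a assms(1) dot_conj by auto
  ultimately show ?case by blast
qed

lemma peval_foldr[simp]: "peval h (foldr Conj ys Top) = (\<forall>x\<in>set ys. peval h x)"
  by (induction ys) auto

lemma existence:
  assumes M: "MCS M" "Dot \<phi> \<notin> M"
  shows "\<exists>N. MCS N \<and> CR M N \<and> \<phi> \<in> N"
proof -
  let ?B = "{\<psi>. Dot \<psi> \<in> M \<and> Dot (Imp \<phi> \<psi>) \<in> M}"
  have "KBd_consistent (insert \<phi> ?B)"
    unfolding KBd_consistent_def
  proof
    assume "\<exists>xs. set xs \<subseteq> insert \<phi> ?B \<and> KBd (Neg (conjs xs))"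
    then obtain xs where xs: "set xs \<subseteq> insert \<phi> ?B" "KBd (Neg (conjs xs))" by blast
    let ?ys = "removeAll \<phi> xs"
    let ?c = "foldr Conj ?ys Top"
    have ys: "set ?ys \<subseteq> ?B" using xs by auto
    have d: "Dot (Imp \<phi> ?c) \<in> M" using foldr_box[OF M(1) ys] by blast
    have "KBd (Iff (Imp \<phi> ?c) (Neg \<phi>))"
      using xs(2) by (rule KBd_cons1) (use xs(1) in auto)
    then have "Dot (Neg \<phi>) \<in> M" using dot_eq[OF M(1)] d by blast
    then show False using M dot_neg by blast
  qed
  then obtain N where N: "insert \<phi> ?B \<subseteq> N" "MCS N" using lindenbaum by blast
  have "CR M N" unfolding CR_def using M(2) N(1) by blast
  then show ?thesis using N by blast
qed

lemma symmetry:
  assumes M: "MCS M" and N: "MCS N" and R: "CR M N" and live: "Dot \<psi> \<notin> N"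
  shows "CR N M"
  unfolding CR_def
proof (intro exI conjI allI impI)
  show "Dot \<psi> \<notin> N" by fact
next
  fix \<theta> assume th: "Dot \<theta> \<in> N \<and> Dot (Imp \<psi> \<theta>) \<in> N"
  show "\<theta> \<in> M"
  proof (rule ccontr)
    assume "\<theta> \<notin> M"
    then have nt: "Neg \<theta> \<in> M" using mcs_neg[OF M] by blast
    obtain \<chi>0 where c0: "Dot \<chi>0 \<notin> M" "\<And>\<phi>. Dot \<phi> \<in> M \<Longrightarrow> Dot (Imp \<chi>0 \<phi>) \<in> M \<Longrightarrow> \<phi> \<in> N"
      using R unfolding CR_def by blast
    define X where "X = Conj (Conj (Dot (Neg \<theta>)) (Dot (Imp (Neg \<theta>) (Neg \<psi>)))) (Neg (Dot (Neg \<psi>)))"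
    have a1: "Dot (Imp X (Neg Top)) \<in> M" using axB[OF M nt] unfolding X_def by blast
    have a2: "Dot (Imp X (Neg \<chi>0)) \<in> M" using axB[OF M nt] unfolding X_def by blast
    have b1: "Dot (Neg X) \<in> M" using a1 by (rule dot_eqt2[OF M]) auto
    have b2: "Dot (Imp \<chi>0 (Neg X)) \<in> M" using a2 by (rule dot_eqt2[OF M]) auto
    have "Neg X \<in> N" using c0 b1 b2 by blast
    moreover have "X \<in> N"
    proof -
      have "Dot (Neg \<theta>) \<in> N" using th dot_neg[OF N] by blast
      moreover have "Dot (Imp (Neg \<theta>) (Neg \<psi>)) \<in> N" using conjunct2[OF th] by (rule dot_eqt2[OF N]) auto
      moreover have "Neg (Dot (Neg \<psi>)) \<in> N" using live dot_neg[OF N] mcs_neg[OF N] by blast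
      ultimately show ?thesis unfolding X_def using mcs_conj[OF N] by blast
    qed
    ultimately show False using mcs_neg[OF N] by blast
  qed
qed



definition live :: "'p fm set \<Rightarrow> bool" where
  "live M \<longleftrightarrow> (\<exists>\<chi>. Dot \<chi> \<notin> M)"

definition E1 :: "(('p fm set \<times> bool) \<times> ('p fm set \<times> bool)) set" where
  "E1 = {((M,a),(N,b)). MCS M \<and> MCS N \<and> CR M N \<and> (live N \<or> b)}"
definition E2 :: "(('p fm set \<times> bool) \<times> ('p fm set \<times> bool)) set" where
  "E2 = {((M,a),(N,b)). MCS M \<and> MCS N \<and> CR M N \<and> (live N \<or> \<not> b)}"
definition CV :: "'p \<Rightarrow> ('p fm set \<times> bool) set" where
  "CV p = {(M,b). MCS M \<and> Atom p \<in> M}"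

lemma CR_live: "CR M N \<Longrightarrow> live M"
  unfolding CR_def live_def by blast

lemma succ_live:
  assumes "MCS M" "live M" "((M,c),(N,b)) \<in> E1 \<union> E1\<inverse> \<or> ((M,c),(N,b)) \<in> E2 \<union> E2\<inverse>"
  shows "MCS N \<and> CR M N"
  using assms symmetry unfolding E1_def E2_def live_def by blast

lemma succ_dead1: "\<not> live M \<Longrightarrow> ((M,c),(N,b)) \<in> E1 \<union> E1\<inverse> \<Longrightarrow> c"
  using CR_live unfolding E1_def by blast
lemma succ_dead2: "\<not> live M \<Longrightarrow> ((M,c),(N,b)) \<in> E2 \<union> E2\<inverse> \<Longrightarrow> \<not> c"
  using CR_live unfolding E2_def by blast

lemma truth:
  assumes "MCS M"
  shows "sat (E1 \<union> E1\<inverse>) (E2 \<union> E2\<inverse>) CV (M,c) \<phi> \<longleftrightarrow> \<phi> \<in> M"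
  using assms
proof (induction \<phi> arbitrary: M c)
  case (Atom p) then show ?case by (simp add: CV_def)
next
  case (Neg \<phi>) then show ?case by (simp add: mcs_neg)
next
  case (Conj \<phi>1 \<phi>2) then show ?case by (simp add: mcs_conj)
next
  case (Dot \<phi>)
  show ?case
  proof (cases "live M")
    case False
    then have "Dot \<phi> \<in> M" unfolding live_def by blast
    moreover have "sat (E1 \<union> E1\<inverse>) (E2 \<union> E2\<inverse>) CV (M,c) (Dot \<phi>)"
      using succ_dead1[OF False] succ_dead2[OF False] by fastforce
    ultimately show ?thesis by blast
  next
    case True
    show ?thesis
    proof
      assume s: "sat (E1 \<union> E1\<inverse>) (E2 \<union> E2\<inverse>) CV (M,c) (Dot \<phi>)"
      show "Dot \<phi> \<in> M"
      proof (rule ccontr)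
        assume n: "Dot \<phi> \<notin> M"
        obtain N1 where N1: "MCS N1" "CR M N1" "\<phi> \<in> N1" using existence[OF Dot.prems n] by blast
        have "Dot (Neg \<phi>) \<notin> M" using n dot_neg[OF Dot.prems] by blast
        then obtain N2 where N2: "MCS N2" "CR M N2" "Neg \<phi> \<in> N2" using existence[OF Dot.prems] by blast
        have r1: "((M,c),(N1,True)) \<in> E1 \<union> E1\<inverse>" using N1 Dot.prems unfolding E1_def by auto
        have r2: "((M,c),(N2,False)) \<in> E2 \<union> E2\<inverse>" using N2 Dot.prems unfolding E2_def by auto
        have "sat (E1 \<union> E1\<inverse>) (E2 \<union> E2\<inverse>) CV (N1,True) \<phi>" using Dot.IH[OF N1(1)] N1 by blast
        moreover have "\<not> sat (E1 \<union> E1\<inverse>) (E2 \<union> E2\<inverse>) CV (N2,False) \<phi>"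
          using Dot.IH[OF N2(1)] N2 mcs_neg[OF N2(1)] by blast
        ultimately show False using s r1 r2 unfolding sat.simps by blast
      qed
    next
      assume d: "Dot \<phi> \<in> M"
      show "sat (E1 \<union> E1\<inverse>) (E2 \<union> E2\<inverse>) CV (M,c) (Dot \<phi>)"
        unfolding sat.simps
      proof (intro allI impI)
        fix t u
        assume t: "((M,c),t) \<in> E1 \<union> E1\<inverse>" and u: "((M,c),u) \<in> E2 \<union> E2\<inverse>"
        obtain N1 b1 where tt: "t = (N1,b1)" by (cases t)
        obtain N2 b2 where uu: "u = (N2,b2)" by (cases u)
        have A: "MCS N1" "CR M N1" using succ_live[OF Dot.prems True] t tt by blast+
        have B: "MCS N2" "CR M N2" using succ_live[OF Dot.prems True] u uu by blast+
        have "\<phi> \<in> N1 \<longleftrightarrow> \<phi> \<in> N2"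
          using constancy[OF Dot.prems d A(1) B(1) A(2) B(2)] constancy[OF Dot.prems d B(1) A(1) B(2) A(2)] by blast
        then show "sat (E1 \<union> E1\<inverse>) (E2 \<union> E2\<inverse>) CV t \<phi> \<longleftrightarrow> sat (E1 \<union> E1\<inverse>) (E2 \<union> E2\<inverse>) CV u \<phi>"
          using Dot.IH[OF A(1)] Dot.IH[OF B(1)] tt uu by simp
      qed
    qed
  qed
qed

lemma transfer:
  assumes inj: "inj_on f S" and R: "R1 \<subseteq> S \<times> S" "R2 \<subseteq> S \<times> S" and V: "\<forall>p. V p \<subseteq> S" and s: "s \<in> S"
  shows "sat (map_prod f f ` R1) (map_prod f f ` R2) (\<lambda>p. f ` V p) (f s) \<phi> \<longleftrightarrow> sat R1 R2 V s \<phi>"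
  using s
proof (induction \<phi> arbitrary: s)
  case (Atom p)
  then show ?case using inj V by (simp add: inj_on_image_mem_iff)
next
  case (Neg \<phi>) then show ?case by simp
next
  case (Conj \<phi>1 \<phi>2) then show ?case by simp
next
  case (Dot \<phi>)
  have img: "(f s, t') \<in> map_prod f f ` R \<longleftrightarrow> (\<exists>t. t' = f t \<and> (s,t) \<in> R)" if "R \<subseteq> S \<times> S" for R t'
  proof
    assume "(f s, t') \<in> map_prod f f ` R"
    then obtain a b where ab: "(a,b) \<in> R" "f s = f a" "t' = f b" by auto
    then have "a = s" using inj that Dot.prems unfolding inj_on_def by blast
    then show "\<exists>t. t' = f t \<and> (s,t) \<in> R" using ab by blast
  qed auto
  have inS: "(s,t) \<in> R1 \<Longrightarrow> t \<in> S" "(s,t) \<in> R2 \<Longrightarrow> t \<in> S" for t using R by auto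
  show ?case
    unfolding sat.simps img[OF R(1)] img[OF R(2)]
    using Dot.IH inS by blast
qed

lemma mcs_nonempty: "MCS M \<Longrightarrow> M \<noteq> {}"
  using mcs_thm[of M Top] KBd_taut[of Top] by auto



theorem mainTheorem16:
  fixes \<Gamma> :: "'p fm set"
  assumes "KBd_consistent \<Gamma>"
  shows "\<exists>(S :: 'p fm set set) R1 R2 V s.
           bimodal_model S R1 R2 V \<and> sym R1 \<and> sym R2 \<and> s \<in> S \<and>
           (\<forall>\<phi>\<in>\<Gamma>. sat R1 R2 V s \<phi>)"
proof -
  obtain M where M: "\<Gamma> \<subseteq> M" "MCS M" using lindenbaum[OF assms] by blast
  define S0 :: "('p fm set \<times> bool) set" where "S0 = {(N,b). MCS N}"
  define f :: "'p fm set \<times> bool \<Rightarrow> 'p fm set" where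
    "f = (\<lambda>(N,b). if b then N else Neg ` N)"
  have inj: "inj_on f S0"
  proof (rule inj_onI)
    fix x y assume x: "x \<in> S0" and y: "y \<in> S0" and e: "f x = f y"
    obtain N1 b1 N2 b2 where xy: "x = (N1,b1)" "y = (N2,b2)" by (cases x, cases y)
    have M1: "MCS N1" "MCS N2" using x y xy unfolding S0_def by auto
    have nM: "Neg ` N \<noteq> N'" if "MCS N" "MCS N'" for N N'
    proof
      assume "Neg ` N = N'"
      moreover have "Top \<in> N'" using mcs_thm[OF that(2)] KBd_taut[of Top] by simp
      ultimately have "Conj (Atom undefined) (Neg (Atom undefined)) \<in> N" unfolding Top_def by auto
      moreover have "Neg (Conj (Atom undefined) (Neg (Atom undefined))) \<in> N"
        using mcs_thm[OF that(1)] KBd_taut[of Top] unfolding Top_def by simp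
      ultimately show False using mcs_neg[OF that(1)] by blast
    qed
    have injNeg: "inj Neg" by (rule injI) simp
    show "x = y"
      using e nM[OF M1(1) M1(2)] nM[OF M1(2) M1(1)] inj_image_eq_iff[OF injNeg, of N1 N2] unfolding xy f_def
      by (cases b1; cases b2) auto
  qed
  have R1: "E1 \<union> E1\<inverse> \<subseteq> S0 \<times> S0" and R2: "E2 \<union> E2\<inverse> \<subseteq> S0 \<times> S0"
    unfolding S0_def E1_def E2_def by auto
  have V: "\<forall>p. CV p \<subseteq> S0" unfolding S0_def CV_def by auto
  have s: "(M,True) \<in> S0" using M unfolding S0_def by auto
  let ?R1 = "map_prod f f ` (E1 \<union> E1\<inverse>)"
  let ?R2 = "map_prod f f ` (E2 \<union> E2\<inverse>)"
  let ?V = "\<lambda>p. f ` CV p"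
  have "bimodal_model (f ` S0) ?R1 ?R2 ?V"
    unfolding bimodal_model_def using s R1 R2 V by (auto simp: map_prod_def)
  moreover have "sym ?R1" "sym ?R2" unfolding sym_def by auto
  moreover have "f (M,True) \<in> f ` S0" using s by auto
  moreover have "\<forall>\<phi>\<in>\<Gamma>. sat ?R1 ?R2 ?V (f (M,True)) \<phi>"
    using transfer[OF inj R1 R2 V s] truth[OF M(2)] M(1) by blast
  ultimately show ?thesis
    apply -
    apply (rule exI[where x="f ` S0"])
    apply (rule exI[where x="?R1"])
    apply (rule exI[where x="?R2"])
    apply (rule exI[where x="?V"])
    apply (rule exI[where x="f (M,True)"])
    by blast
qed

end
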